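(* Consider the setting described in the context, where only the dissipative part of the numerical flux is kept, i.e. the numerical flux is $\Phi_{i+1/2}=-\tfrac12 D_{i+1/2}(u_R-u_L)_{i+1/2}$ (equivalently $f_L=f_R=0$). Let $\mathcal{E}_j=(\Phi_{j+1/2}-\Phi_{j-1/2})/h$. Then, as $h\to 0$ with all derivatives evaluated at $x_j$: (i) if $\kappa_3=\kappa-1$, $$\mathcal{E}_j=\frac{\kappa-1}{32}\left[\frac{\partial D}{\partial x}\frac{\partial^5 u}{\partial x^5}+D(u(x_j))\frac{\partial^6 u}{\partial x^6}\right]h^5+O(h^7);$$ (ii) if $\kappa_3=0$, $$\mathcal{E}_j=-\frac{\kappa-1}{8}\left[\frac{\partial D}{\partial x}\frac{\partial^3 u}{\partial x^3}+D(u(x_j))\frac{\partial^4 u}{\partial x^4}\right]h^3+O(h^5).$$ Here $\partial D/\partial x$ denotes $\frac{d}{dx}D(u(x))$.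
   Context: Let $h>0$ and consider the uniform one-dimensional grid $x_i=ih$, $i\in\mathbb{Z}$. Let $u$ be a smooth ($C^\infty$) real function of $x$ and $u_i=u(x_i)$. Let $D$ be a smooth real function of one variable (dissipation coefficient). Nodal derivative approximations are obtained by successive central differencing: $(u_x)_i=(u_{i+1}-u_{i-1})/(2h)$ and $(u_{xx})_i=((u_x)_{i+1}-(u_x)_{i-1})/(2h)$. At the face $i+1/2$, with $j=i$, $k=i+1$, and parameters $\kappa,\kappa_3\in\mathbb{R}$, the reconstructed states are $u_L=\kappa\frac{u_j+u_k}{2}+(1-\kappa)\left[u_j+\frac h2(u_x)_j\right]+\kappa_3T_j$, $u_R=\kappa\frac{u_j+u_k}{2}+(1-\kappa)\left[u_k-\frac h2(u_x)_k\right]+\kappa_3T_k$, where $T_j=\frac h4\big((u_x)_k-(u_x)_j\big)-\frac{h^2}{4}(u_{xx})_j$ and $T_k=\frac h4\big((u_x)_k-(u_x)_j\big)-\frac{h^2}{4}(u_{xx})_k$; these are denoted $(u_L)_{i+1/2},(u_R)_{i+1/2}$. The face dissipation coefficient is $D_{i+1/2}=\bar D(u_i,u_{i+1})$, where $\bar D$ is a smooth symmetric function of two variables with $\bar D(v,v)=D(v)$ (e.g. $D$ evaluated at an average state). *)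

theory Defs
  imports "HOL-Analysis.Analysis" "HOL-Library.Landau_Symbols"
begin

definition smooth1 :: "(real \<Rightarrow> real) \<Rightarrow> bool" where
  "smooth1 f \<longleftrightarrow> (\<forall>n y. ((deriv ^^ n) f) differentiable (at y))"

definition pdx :: "(real \<times> real \<Rightarrow> real) \<Rightarrow> real \<times> real \<Rightarrow> real" where
  "pdx f = (\<lambda>(a, b). deriv (\<lambda>s. f (s, b)) a)"
definition pdy :: "(real \<times> real \<Rightarrow> real) \<Rightarrow> real \<times> real \<Rightarrow> real" where
  "pdy f = (\<lambda>(a, b). deriv (\<lambda>t. f (a, t)) b)"

fun pds :: "bool list \<Rightarrow> (real \<times> real \<Rightarrow> real) \<Rightarrow> real \<times> real \<Rightarrow> real" where
  "pds [] f = f"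
| "pds (b # w) f = (if b then pdx (pds w f) else pdy (pds w f))"

definition smooth2 :: "(real \<times> real \<Rightarrow> real) \<Rightarrow> bool" where
  "smooth2 f \<longleftrightarrow> (\<forall>w. continuous_on UNIV (pds w f) \<and>
      (\<forall>a b. (\<lambda>s. pds w f (s, b)) differentiable (at a) \<and>
             (\<lambda>t. pds w f (a, t)) differentiable (at b)))"

text \<open>Stencil centred at the node x (playing the role of x_j); node m is x + m h.\<close>
definition nodeval :: "(real \<Rightarrow> real) \<Rightarrow> real \<Rightarrow> real \<Rightarrow> int \<Rightarrow> real" where
  "nodeval u x h m = u (x + of_int m * h)"

definition ux :: "(real \<Rightarrow> real) \<Rightarrow> real \<Rightarrow> real \<Rightarrow> int \<Rightarrow> real" where
  "ux u x h m = (nodeval u x h (m + 1) - nodeval u x h (m - 1)) / (2 * h)"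

definition uxx :: "(real \<Rightarrow> real) \<Rightarrow> real \<Rightarrow> real \<Rightarrow> int \<Rightarrow> real" where
  "uxx u x h m = (ux u x h (m + 1) - ux u x h (m - 1)) / (2 * h)"

text \<open>Face i+1/2 with j = i, k = i+1.\<close>
definition TL :: "(real \<Rightarrow> real) \<Rightarrow> real \<Rightarrow> real \<Rightarrow> int \<Rightarrow> real" where
  "TL u x h i = h / 4 * (ux u x h (i + 1) - ux u x h i) - h\<^sup>2 / 4 * uxx u x h i"
definition TR :: "(real \<Rightarrow> real) \<Rightarrow> real \<Rightarrow> real \<Rightarrow> int \<Rightarrow> real" where
  "TR u x h i = h / 4 * (ux u x h (i + 1) - ux u x h i) - h\<^sup>2 / 4 * uxx u x h (i + 1)"

definition uL :: "real \<Rightarrow> real \<Rightarrow> (real \<Rightarrow> real) \<Rightarrow> real \<Rightarrow> real \<Rightarrow> int \<Rightarrow> real" where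
  "uL \<kappa> \<kappa>3 u x h i =
     \<kappa> * (nodeval u x h i + nodeval u x h (i + 1)) / 2
     + (1 - \<kappa>) * (nodeval u x h i + h / 2 * ux u x h i) + \<kappa>3 * TL u x h i"

definition uR :: "real \<Rightarrow> real \<Rightarrow> (real \<Rightarrow> real) \<Rightarrow> real \<Rightarrow> real \<Rightarrow> int \<Rightarrow> real" where
  "uR \<kappa> \<kappa>3 u x h i =
     \<kappa> * (nodeval u x h i + nodeval u x h (i + 1)) / 2
     + (1 - \<kappa>) * (nodeval u x h (i + 1) - h / 2 * ux u x h (i + 1)) + \<kappa>3 * TR u x h i"

definition Phi :: "(real \<times> real \<Rightarrow> real) \<Rightarrow> real \<Rightarrow> real \<Rightarrow> (real \<Rightarrow> real) \<Rightarrow> real \<Rightarrow> real \<Rightarrow> int \<Rightarrow> real" where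
  "Phi Dbar \<kappa> \<kappa>3 u x h i =
     - 1 / 2 * Dbar (nodeval u x h i, nodeval u x h (i + 1))
       * (uR \<kappa> \<kappa>3 u x h i - uL \<kappa> \<kappa>3 u x h i)"

text \<open>E_j = (Phi_{j+1/2} - Phi_{j-1/2}) / h, with node j at x (index 0).\<close>
definition Err :: "(real \<times> real \<Rightarrow> real) \<Rightarrow> real \<Rightarrow> real \<Rightarrow> (real \<Rightarrow> real) \<Rightarrow> real \<Rightarrow> real \<Rightarrow> real" where
  "Err Dbar \<kappa> \<kappa>3 u x h = (Phi Dbar \<kappa> \<kappa>3 u x h 0 - Phi Dbar \<kappa> \<kappa>3 u x h (-1)) / h"

end

theory Submission
  imports Defs
begin

definition Lnode :: "real \<Rightarrow> real \<Rightarrow> (real \<Rightarrow> real) \<Rightarrow> real \<Rightarrow> real \<Rightarrow> real" where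
 "Lnode k k3 u x h = (1-k)*(u(x+1*h) - u(x+0*h)) - (1-k)/4*(u(x+2*h) - u(x+0*h) + u(x+1*h) - u(x+(-1)*h))
   - k3/16*(u(x+3*h) - 2*u(x+1*h) + u(x+(-1)*h)) + k3/16*(u(x+2*h) - 2*u(x+0*h) + u(x+(-2)*h))"

lemma L0_id: assumes "h \<noteq> 0"
  shows "uR k k3 u x h 0 - uL k k3 u x h 0 = Lnode k k3 u x h"
  using assms
  by (simp add: uR_def uL_def TL_def TR_def ux_def uxx_def nodeval_def Lnode_def power2_eq_square field_simps)

lemma L1_id: assumes "h \<noteq> 0"
  shows "uR k k3 u x h (-1) - uL k k3 u x h (-1) = - Lnode k k3 u x (-h)"
  using assms
  by (simp add: uR_def uL_def TL_def TR_def ux_def uxx_def nodeval_def Lnode_def power2_eq_square field_simps)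

definition Tay :: "(real \<Rightarrow> real) \<Rightarrow> real \<Rightarrow> nat \<Rightarrow> real \<Rightarrow> real" where
  "Tay u x N t = (\<Sum>k<N. (deriv ^^ k) u x / fact k * t ^ k)"

lemma Tay8: "Tay u x 8 t = (deriv ^^ 0) u x + (deriv ^^ 1) u x * t + (deriv ^^ 2) u x / 2 * t^2
  + (deriv ^^ 3) u x / 6 * t^3 + (deriv ^^ 4) u x / 24 * t^4 + (deriv ^^ 5) u x / 120 * t^5
  + (deriv ^^ 6) u x / 720 * t^6 + (deriv ^^ 7) u x / 5040 * t^7"
  by (simp add: Tay_def eval_nat_numeral fact_Suc)

lemma Tay6: "Tay u x 6 t = (deriv ^^ 0) u x + (deriv ^^ 1) u x * t + (deriv ^^ 2) u x / 2 * t^2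
  + (deriv ^^ 3) u x / 6 * t^3 + (deriv ^^ 4) u x / 24 * t^4 + (deriv ^^ 5) u x / 120 * t^5"
  by (simp add: Tay_def eval_nat_numeral fact_Suc)

abbreviation "TL8 k k3 u x h \<equiv> (1-k)*(Tay u x 8 (1*h) - Tay u x 8 (0*h)) - (1-k)/4*(Tay u x 8 (2*h) - Tay u x 8 (0*h) + Tay u x 8 (1*h) - Tay u x 8 ((-1)*h))
   - k3/16*(Tay u x 8 (3*h) - 2*Tay u x 8 (1*h) + Tay u x 8 ((-1)*h)) + k3/16*(Tay u x 8 (2*h) - 2*Tay u x 8 (0*h) + Tay u x 8 ((-2)*h))"

lemma Q8: "TL8 k (k-1) u x h = - (k - 1) * ((deriv ^^ 5) u x / 16 * h^5 + (deriv ^^ 6) u x / 32 * h^6 + (deriv ^^ 7) u x / 48 * h^7)"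
  unfolding Tay8 by (simp add: power_mult_distrib field_simps) 

abbreviation "TL6 k k3 u x h \<equiv> (1-k)*(Tay u x 6 (1*h) - Tay u x 6 (0*h)) - (1-k)/4*(Tay u x 6 (2*h) - Tay u x 6 (0*h) + Tay u x 6 (1*h) - Tay u x 6 ((-1)*h))
   - k3/16*(Tay u x 6 (3*h) - 2*Tay u x 6 (1*h) + Tay u x 6 ((-1)*h)) + k3/16*(Tay u x 6 (2*h) - 2*Tay u x 6 (0*h) + Tay u x 6 ((-2)*h))"

lemma Q6: "TL6 k 0 u x h = (k - 1) * ((deriv ^^ 3) u x / 4 * h^3 + (deriv ^^ 4) u x / 8 * h^4 + (deriv ^^ 5) u x / 16 * h^5)"
  unfolding Tay6 by (simp add: power_mult_distrib field_simps) 

lemma smooth1_DERIV: assumes "smooth1 u"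
  shows "DERIV ((deriv ^^ n) u) y :> (deriv ^^ (Suc n)) u y"
proof -
  have "((deriv ^^ n) u) differentiable (at y)" using assms by (simp add: smooth1_def)
  then show ?thesis by (simp add: DERIV_deriv_iff_real_differentiable)
qed

lemma taylor_bigo: assumes "smooth1 u"
  shows "(\<lambda>t. u (x + c*t) - Tay u x N (c*t)) \<in> O[nhds 0](\<lambda>t. t ^ N)"
proof -
  have cont: "continuous_on UNIV ((deriv ^^ N) u)"
    using smooth1_DERIV[OF assms] by (meson DERIV_isCont continuous_at_imp_continuous_on)
  have "bounded ((deriv ^^ N) u ` cball x \<bar>c\<bar>)"
    by (rule compact_imp_bounded[OF compact_continuous_image]) (use cont continuous_on_subset in auto)
  then obtain M where M: "\<And>y. y \<in> cball x \<bar>c\<bar> \<Longrightarrow> \<bar>(deriv ^^ N) u y\<bar> \<le> M"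
    unfolding bounded_iff by (auto simp del: mem_cball)
  have ev: "\<forall>\<^sub>F t in nhds (0::real). \<bar>t\<bar> < 1"
  proof -
    have "\<forall>\<^sub>F t in nhds (0::real). t \<in> ball 0 1" by (rule eventually_nhds_in_open) auto
    then show ?thesis by (auto elim!: eventually_mono)
  qed
  have bnd: "\<bar>u (x + c*t) - Tay u x N (c*t)\<bar> \<le> (M / fact N * \<bar>c\<bar>^N) * \<bar>t ^ N\<bar>" if "\<bar>t\<bar> < 1" for t
  proof -
    have d: "\<forall>m s. DERIV (\<lambda>s. (deriv ^^ m) u (x + s)) s :> (deriv ^^ Suc m) u (x + s)"
    proof (intro allI)
      fix m s
      show "DERIV (\<lambda>s. (deriv ^^ m) u (x + s)) s :> (deriv ^^ Suc m) u (x + s)"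
      proof -
        have "DERIV (\<lambda>s. x + s) s :> 1" by (auto intro!: derivative_eq_intros)
        from DERIV_chain2[OF smooth1_DERIV[OF assms, of m "x+s"] this] show ?thesis by simp
      qed
    qed
    obtain z where z: "\<bar>z\<bar> \<le> \<bar>c*t\<bar>"
      and eq: "u (x + c*t) = (\<Sum>m<N. ((deriv ^^ m) u (x + 0) / fact m) * (c*t) ^ m) + ((deriv ^^ N) u (x + z) / fact N) * (c*t) ^ N"
      using Maclaurin_all_le[of "\<lambda>m s. (deriv ^^ m) u (x + s)" "\<lambda>s. u (x + s)", OF _ d, of "c*t" N] by auto
    have "\<bar>z\<bar> \<le> \<bar>c\<bar>" proof -
      have "\<bar>c\<bar> * \<bar>t\<bar> \<le> \<bar>c\<bar> * 1" using that by (intro mult_left_mono) auto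
      then show ?thesis using z by (simp add: abs_mult)
    qed
    then have "x + z \<in> cball x \<bar>c\<bar>" by (simp add: dist_norm)
    then have Mz: "\<bar>(deriv ^^ N) u (x + z)\<bar> \<le> M" by (rule M)
    have "u (x + c*t) - Tay u x N (c*t) = (deriv ^^ N) u (x + z) / fact N * (c*t) ^ N"
      using eq by (simp add: Tay_def)
    also have "\<bar>\<dots>\<bar> = \<bar>(deriv ^^ N) u (x + z)\<bar> / fact N * \<bar>c\<bar>^N * \<bar>t ^ N\<bar>"
      by (simp add: abs_mult power_mult_distrib power_abs)
    also have "\<dots> \<le> M / fact N * \<bar>c\<bar>^N * \<bar>t ^ N\<bar>"
      by (intro mult_right_mono divide_right_mono Mz) auto
    finally show ?thesis .
  qed
  show ?thesis
    by (rule bigoI[where c="M / fact N * \<bar>c\<bar>^N"]) (use ev bnd in \<open>auto elim!: eventually_mono\<close>)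
qed

lemma bigo_cmult: "f \<in> O[F](g) \<Longrightarrow> (\<lambda>x. c * f x) \<in> O[F](g)"
  by (cases "c = 0") auto

lemma Lnode_bigo:
  assumes "smooth1 u"
  shows "(\<lambda>h. Lnode k k3 u x h - ((1-k)*(Tay u x N (1*h) - Tay u x N (0*h)) - (1-k)/4*(Tay u x N (2*h) - Tay u x N (0*h) + Tay u x N (1*h) - Tay u x N ((-1)*h))
   - k3/16*(Tay u x N (3*h) - 2*Tay u x N (1*h) + Tay u x N ((-1)*h)) + k3/16*(Tay u x N (2*h) - 2*Tay u x N (0*h) + Tay u x N ((-2)*h))))
   \<in> O[nhds 0](\<lambda>h. h ^ N)"
proof -
  define R where "R \<equiv> \<lambda>c h. u (x + c*h) - Tay u x N (c*h)"
  have T: "R c \<in> O[nhds 0](\<lambda>h. h ^ N)" for c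
    unfolding R_def using taylor_bigo[OF assms, of x c N] by simp
  have eq: "Lnode k k3 u x h - ((1-k)*(Tay u x N (1*h) - Tay u x N (0*h)) - (1-k)/4*(Tay u x N (2*h) - Tay u x N (0*h) + Tay u x N (1*h) - Tay u x N ((-1)*h))
   - k3/16*(Tay u x N (3*h) - 2*Tay u x N (1*h) + Tay u x N ((-1)*h)) + k3/16*(Tay u x N (2*h) - 2*Tay u x N (0*h) + Tay u x N ((-2)*h)))
   = (1-k)*(R 1 h - R 0 h) - (1-k)/4*(R 2 h - R 0 h + R 1 h - R (-1) h)
   - k3/16*(R 3 h - 2*R 1 h + R (-1) h) + k3/16*(R 2 h - 2*R 0 h + R (-2) h)" for h
    unfolding R_def Lnode_def by (simp add: field_simps)
  show ?thesis
    unfolding eq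
    by (intro sum_in_bigo bigo_cmult T)
qed

lemma L8:
  assumes "smooth1 u"
  shows "(\<lambda>h. Lnode k (k-1) u x h - (- (k - 1) * ((deriv ^^ 5) u x / 16 * h^5 + (deriv ^^ 6) u x / 32 * h^6 + (deriv ^^ 7) u x / 48 * h^7)))
      \<in> O[nhds 0](\<lambda>h. h ^ 8)"
  using Lnode_bigo[OF assms, of k "k-1" x 8] unfolding Q8 .

lemma L6:
  assumes "smooth1 u"
  shows "(\<lambda>h. Lnode k 0 u x h - ((k - 1) * ((deriv ^^ 3) u x / 4 * h^3 + (deriv ^^ 4) u x / 8 * h^4 + (deriv ^^ 5) u x / 16 * h^5)))
      \<in> O[nhds 0](\<lambda>h. h ^ 6)"
  using Lnode_bigo[OF assms, of k 0 x 6] unfolding Q6 .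

lemma deriv_iter_phi: assumes "smooth2 Dbar"
  shows "(deriv ^^ n) (\<lambda>t. Dbar (b, t)) = (\<lambda>t. pds (replicate n False) Dbar (b, t))"
proof (induction n)
  case 0 then show ?case by simp
next
  case (Suc n)
  show ?case by (simp add: Suc pdy_def)
qed

lemma smooth1_phi: assumes "smooth2 Dbar" shows "smooth1 (\<lambda>t. Dbar (b, t))"
  unfolding smooth1_def deriv_iter_phi[OF assms] using assms by (simp add: smooth2_def)

lemma D_deriv:
  assumes S: "smooth2 Dbar" and sym: "\<And>v w. Dbar (v, w) = Dbar (w, v)"
    and diag: "\<And>v. Dbar (v, v) = D v"
  shows "DERIV D a :> 2 * pdy Dbar (a, a)"
proof -
  define p where "p = pdy Dbar (a, a)"
  have dphi: "DERIV (\<lambda>t. Dbar (a, t)) a :> p"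
    using smooth1_DERIV[OF smooth1_phi[OF S, of a], of 0 a]
    unfolding deriv_iter_phi[OF S] p_def by (simp add: pdy_def)
  have Q1: "(\<lambda>s. (Dbar (a, a + s) - Dbar (a, a)) / s) \<midarrow>0\<rightarrow> p"
    using dphi by (simp add: DERIV_def)
  have contp: "continuous_on UNIV (pdy Dbar)"
    using S unfolding smooth2_def by (metis pds.simps(1) pds.simps(2))
  have mvt: "\<exists>z. \<bar>z\<bar> \<le> \<bar>s\<bar> \<and> Dbar (a + s, a + s) - Dbar (a + s, a) = pdy Dbar (a + s, a + z) * s" for s
  proof -
    define b where "b = a + s"
    have d: "\<forall>m r. DERIV (\<lambda>r. (deriv ^^ m) (\<lambda>t. Dbar (b, t)) (a + r)) r :> (deriv ^^ Suc m) (\<lambda>t. Dbar (b, t)) (a + r)"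
    proof (intro allI)
      fix m r
      have "DERIV (\<lambda>s. a + s) r :> 1" by (auto intro!: derivative_eq_intros)
      from DERIV_chain2[OF smooth1_DERIV[OF smooth1_phi[OF S, of b], of m "a+r"] this]
      show "DERIV (\<lambda>r. (deriv ^^ m) (\<lambda>t. Dbar (b, t)) (a + r)) r :> (deriv ^^ Suc m) (\<lambda>t. Dbar (b, t)) (a + r)"
        by simp
    qed
    obtain z where "\<bar>z\<bar> \<le> \<bar>s\<bar>" and eq: "Dbar (b, a + s) = (\<Sum>m<1. ((deriv ^^ m) (\<lambda>t. Dbar (b, t)) (a + 0) / fact m) * s ^ m)
        + ((deriv ^^ 1) (\<lambda>t. Dbar (b, t)) (a + z) / fact 1) * s ^ 1"
      using Maclaurin_all_le[of "\<lambda>m r. (deriv ^^ m) (\<lambda>t. Dbar (b, t)) (a + r)" "\<lambda>r. Dbar (b, a + r)", OF _ d, of s 1]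
      by auto
    then show ?thesis
      unfolding deriv_iter_phi[OF S] b_def by (intro exI[of _ z]) (simp add: pdy_def)
  qed
  have Q2: "(\<lambda>s. (Dbar (a + s, a + s) - Dbar (a + s, a)) / s) \<midarrow>0\<rightarrow> p"
  proof (rule LIM_I)
    fix r :: real assume r: "0 < r"
    from contp r obtain d where d: "d > 0"
      and dd: "\<And>y. dist y (a, a) < d \<Longrightarrow> dist (pdy Dbar y) (pdy Dbar (a, a)) < r"
      unfolding continuous_on_iff by (metis UNIV_I)
    show "\<exists>e>0. \<forall>s. s \<noteq> 0 \<and> norm (s - 0) < e \<longrightarrow> norm ((Dbar (a + s, a + s) - Dbar (a + s, a)) / s - p) < r"
    proof (intro exI[of _ "d/2"] conjI allI impI)
      show "d/2 > 0" using d by simp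
      fix s :: real assume s: "s \<noteq> 0 \<and> norm (s - 0) < d/2"
      obtain z where z: "\<bar>z\<bar> \<le> \<bar>s\<bar>" and eq: "Dbar (a + s, a + s) - Dbar (a + s, a) = pdy Dbar (a + s, a + z) * s"
        using mvt by blast
      have "dist (a + s, a + z) (a, a) \<le> norm s + norm z"
        using norm_Pair_le[of s z] by (simp add: dist_norm)
      also have "\<dots> < d" using s z by simp
      finally have "dist (pdy Dbar (a + s, a + z)) p < r" using dd p_def by blast
      then show "norm ((Dbar (a + s, a + s) - Dbar (a + s, a)) / s - p) < r"
        using s by (simp add: eq dist_norm)
    qed
  qed
  have "(\<lambda>s. (Dbar (a + s, a + s) - Dbar (a + s, a)) / s + (Dbar (a, a + s) - Dbar (a, a)) / s) \<midarrow>0\<rightarrow> p + p"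
    by (intro tendsto_add Q1 Q2)
  moreover have "(Dbar (a + s, a + s) - Dbar (a + s, a)) / s + (Dbar (a, a + s) - Dbar (a, a)) / s = (D (a + s) - D a) / s" for s
    using sym[of "a+s" a] diag[of a] diag[of "a+s"] by (simp add: diff_divide_distrib)
  ultimately show ?thesis unfolding DERIV_def p_def by simp
qed

lemma Tay3: "Tay u x 3 t = (deriv ^^ 0) u x + (deriv ^^ 1) u x * t + (deriv ^^ 2) u x / 2 * t^2"
  by (simp add: Tay_def eval_nat_numeral fact_Suc)
lemma Tay2: "Tay u x 2 t = (deriv ^^ 0) u x + (deriv ^^ 1) u x * t"
  by (simp add: Tay_def eval_nat_numeral fact_Suc)
lemma Tay1: "Tay u x 1 t = (deriv ^^ 0) u x"
  by (simp add: Tay_def)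

lemma bigo_id: "(\<lambda>h::real. h) \<in> O[F](\<lambda>h. h)"
  by (rule bigoI[of _ 1]) simp

lemma g_expansion:
  assumes U: "smooth1 u" and S: "smooth2 Dbar" and sym: "\<And>v w. Dbar (v, w) = Dbar (w, v)"
    and diag: "\<And>v. Dbar (v, v) = D v"
  shows "\<exists>g2. (\<lambda>h. Dbar (u x, u (x + h)) - (D (u x) + deriv (\<lambda>y. D (u y)) x / 2 * h + g2 * h^2))
           \<in> O[nhds 0](\<lambda>h. h ^ 3)"
proof -
  define a where "a = u x"
  define \<phi> where "\<phi> = (\<lambda>t. Dbar (a, t))"
  define s where "s = (\<lambda>h. u (x + h) - a)"
  define p1 where "p1 = (deriv ^^ 1) \<phi> a"
  define p2 where "p2 = (deriv ^^ 2) \<phi> a"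
  define U1 where "U1 = (deriv ^^ 1) u x"
  define U2 where "U2 = (deriv ^^ 2) u x"
  have sm\<phi>: "smooth1 \<phi>" unfolding \<phi>_def by (rule smooth1_phi[OF S])
  have p1: "p1 = pdy Dbar (a, a)"
    unfolding p1_def \<phi>_def deriv_iter_phi[OF S] by simp
  have dDu: "deriv (\<lambda>y. D (u y)) x = 2 * p1 * U1"
  proof -
    have "DERIV (\<lambda>y. D (u y)) x :> 2 * pdy Dbar (a, a) * (deriv ^^ 1) u x"
    proof -
      have du: "DERIV u x :> (deriv ^^ 1) u x" using smooth1_DERIV[OF U, of 0 x] by simp
      show ?thesis using DERIV_chain2[OF D_deriv[OF S sym diag, of "u x"] du] unfolding a_def by simp
    qed
    then show ?thesis unfolding p1 U1_def by (rule DERIV_imp_deriv)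
  qed
  have D0: "(deriv ^^ 0) \<phi> a = D a" unfolding \<phi>_def by (simp add: diag)
  have R\<phi>: "(\<lambda>r. \<phi> (a + 1*r) - Tay \<phi> a 3 (1*r)) \<in> O[nhds 0](\<lambda>r. r ^ 3)"
    by (rule taylor_bigo[OF sm\<phi>])
  have lim_s: "filterlim s (nhds 0) (nhds 0)"
  proof -
    have cu: "isCont u x" using smooth1_DERIV[OF U, of 0 x] by (simp add: DERIV_isCont)
    have "((\<lambda>h. x + h) \<longlongrightarrow> x) (nhds (0::real))"
      using tendsto_add[OF tendsto_const[of x] filterlim_ident[of "nhds (0::real)"]] by simp
    from isCont_tendsto_compose[OF cu this]
    have "((\<lambda>h. u (x + h) - a) \<longlongrightarrow> u x - a) (nhds 0)" by (intro tendsto_diff tendsto_const)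
    then show ?thesis by (simp add: s_def a_def filterlim_def)
  qed
  have R\<phi>s: "(\<lambda>h. \<phi> (a + s h) - Tay \<phi> a 3 (s h)) \<in> O[nhds 0](\<lambda>h. s h ^ 3)"
    using landau_o.big.compose[OF R\<phi> lim_s] by simp
  have sO: "s \<in> O[nhds 0](\<lambda>h. h)"
    using taylor_bigo[OF U, of x 1 1] unfolding Tay1 s_def a_def by simp
  have s3: "(\<lambda>h. s h ^ 3) \<in> O[nhds 0](\<lambda>h. h ^ 3)"
    by (rule landau_o.big_power[OF sO])
  have R3: "(\<lambda>h. u (x + h) - Tay u x 3 h) \<in> O[nhds 0](\<lambda>h. h ^ 3)"
    using taylor_bigo[OF U, of x 1 3] by simp
  have R2: "(\<lambda>h. u (x + h) - Tay u x 2 h) \<in> O[nhds 0](\<lambda>h. h ^ 2)"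
    using taylor_bigo[OF U, of x 1 2] by simp
  have sp: "(\<lambda>h. s h + U1 * h) \<in> O[nhds 0](\<lambda>h. h)"
    by (intro sum_in_bigo sO bigo_cmult bigo_id)
  have prod: "(\<lambda>h. (u (x + h) - Tay u x 2 h) * (s h + U1 * h)) \<in> O[nhds 0](\<lambda>h. h ^ 3)"
  proof -
    have "(\<lambda>h. (u (x + h) - Tay u x 2 h) * (s h + U1 * h)) \<in> O[nhds 0](\<lambda>h. h ^ 2 * h)"
      by (rule landau_o.big.mult[OF R2 sp])
    moreover have "(\<lambda>h::real. h ^ 2 * h) = (\<lambda>h. h ^ 3)" by (simp add: power3_eq_cube power2_eq_square)
    ultimately show ?thesis by simp
  qed
  define g2 where "g2 = p1 * U2 / 2 + p2 / 2 * U1 ^ 2"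
  have eq: "Dbar (u x, u (x + h)) - (D (u x) + deriv (\<lambda>y. D (u y)) x / 2 * h + g2 * h^2)
      = (\<phi> (a + s h) - Tay \<phi> a 3 (s h)) + p1 * (u (x + h) - Tay u x 3 h)
        + p2 / 2 * ((u (x + h) - Tay u x 2 h) * (s h + U1 * h))" for h
  proof -
    have e1: "\<phi> (a + s h) = Dbar (u x, u (x+h))" by (simp add: \<phi>_def s_def a_def)
    have e2: "Tay \<phi> a 3 (s h) = D (u x) + p1 * s h + p2/2 * (s h)^2"
      unfolding Tay3 p1_def p2_def by (simp add: \<phi>_def diag a_def)
    have e3: "Tay u x 3 h = u x + U1*h + U2/2*h^2" unfolding Tay3 U1_def U2_def by simp
    have e4: "Tay u x 2 h = u x + U1*h" unfolding Tay2 U1_def by simp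
    have e5: "u (x+h) = s h + u x" by (simp add: s_def a_def)
    show ?thesis unfolding dDu g2_def e1 e2 e3 e4 e5 by (simp add: algebra_simps power2_eq_square)
  qed
  have "(\<lambda>h. Dbar (u x, u (x + h)) - (D (u x) + deriv (\<lambda>y. D (u y)) x / 2 * h + g2 * h^2))
           \<in> O[nhds 0](\<lambda>h. h ^ 3)"
    unfolding eq
    by (intro sum_in_bigo bigo_cmult R3 prod landau_o.big.trans[OF R\<phi>s s3])
  then show ?thesis by blast
qed

lemma ev_small: "\<forall>\<^sub>F h in nhds (0::real). \<bar>h\<bar> < 1"
proof -
  have "\<forall>\<^sub>F t in nhds (0::real). t \<in> ball 0 1" by (rule eventually_nhds_in_open) auto
  then show ?thesis by (auto elim!: eventually_mono)
qed

lemma pow_bigo: assumes "k \<le> n" shows "(\<lambda>h::real. h ^ n) \<in> O[nhds 0](\<lambda>h. h ^ k)"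
proof -
  have *: "norm (h ^ n) \<le> 1 * norm (h ^ k)" if "\<bar>h\<bar> < 1" for h :: real
    using power_decreasing[OF assms, of "\<bar>h\<bar>"] that by (simp add: power_abs)
  show ?thesis by (rule bigoI[where c=1], rule eventually_mono[OF ev_small *])
qed

lemma const_bigo: "(\<lambda>h. d::real) \<in> O[F](\<lambda>_. 1)"
  by (rule bigoI[where c="\<bar>d\<bar>"]) simp

lemma pow_bigo1: "(\<lambda>h::real. h ^ n) \<in> O[nhds 0](\<lambda>_. 1)"
  using pow_bigo[of 0 n] by simp

lemma id_bigo1: "(\<lambda>h::real. h) \<in> O[nhds 0](\<lambda>_. 1)"
  using pow_bigo[of 0 1] by simp

lemma combine:
  fixes g G L Q :: "real \<Rightarrow> real"
  assumes gG: "(\<lambda>h. g h - G h) \<in> O[nhds 0](\<lambda>h. h ^ 3)"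
    and LQ: "(\<lambda>h. L h - Q h) \<in> O[nhds 0](\<lambda>h. h ^ (3 + m))"
    and Qo: "Q \<in> O[nhds 0](\<lambda>h. h ^ m)"
    and Gb: "G \<in> O[nhds 0](\<lambda>_. 1)"
  shows "(\<lambda>h. g h * L h - G h * Q h) \<in> O[nhds 0](\<lambda>h. h ^ (3 + m))"
proof -
  have Lo: "L \<in> O[nhds 0](\<lambda>h. h ^ m)"
  proof -
    have "(\<lambda>h. (L h - Q h) + Q h) \<in> O[nhds 0](\<lambda>h. h ^ m)"
      by (rule sum_in_bigo(1)[OF landau_o.big.trans[OF LQ pow_bigo] Qo]) simp
    then show ?thesis by simp
  qed
  have A: "(\<lambda>h. (g h - G h) * L h) \<in> O[nhds 0](\<lambda>h. h ^ (3 + m))"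
    using landau_o.big.mult[OF gG Lo] by (simp add: power_add)
  have B: "(\<lambda>h. G h * (L h - Q h)) \<in> O[nhds 0](\<lambda>h. h ^ (3 + m))"
    using landau_o.big.mult[OF Gb LQ] by simp
  have "(\<lambda>h. (g h - G h) * L h + G h * (L h - Q h)) \<in> O[nhds 0](\<lambda>h. h ^ (3 + m))"
    by (rule sum_in_bigo(1)[OF A B])
  then show ?thesis by (simp add: algebra_simps)
qed

lemma lim_uminus: "filterlim (\<lambda>h::real. - h) (nhds 0) (nhds 0)"
  using tendsto_minus[OF filterlim_ident[of "nhds (0::real)"]] by (simp add: filterlim_def)

lemma final_div:
  fixes E :: "real \<Rightarrow> real"
  assumes "E \<in> O[nhds 0](\<lambda>h. h ^ Suc n)"
  shows "(\<lambda>h. E h / h) \<in> O[at_right 0](\<lambda>h. h ^ n)"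
proof -
  have "at_right (0::real) \<le> nhds 0" by (simp add: at_within_def)
  then have E: "E \<in> O[at_right 0](\<lambda>h. h ^ Suc n)" by (rule landau_o.big.filter_mono[OF _ assms])
  have "(\<lambda>h. inverse h * E h) \<in> O[at_right 0](\<lambda>h. inverse h * h ^ Suc n)"
    by (rule landau_o.big.mult_left[OF E])
  moreover have e1: "\<forall>\<^sub>F h in at_right (0::real). inverse h * E h = E h / h"
    by (simp add: divide_inverse mult.commute)
  moreover have e2: "\<forall>\<^sub>F h in at_right (0::real). inverse h * h ^ Suc n = h ^ n"
    using eventually_at_right_less[of "0::real"] by (auto elim!: eventually_mono)
  ultimately show ?thesis using landau_o.big.cong_ex[OF e1 e2] by simp
qed

lemma assemble:
  fixes g G L Q Err :: "real \<Rightarrow> real"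
  assumes PQ: "(\<lambda>h. g h * L h - G h * Q h) \<in> O[nhds 0](\<lambda>h. h ^ Suc j)"
    and poly: "\<And>h. -1/2*(G h * Q h + G (-h) * Q (-h)) - C * h ^ Suc k = K * h ^ Suc j"
    and errid: "\<And>h. h \<noteq> 0 \<Longrightarrow> Err h = -1/2*(g h * L h + g (-h) * L (-h)) / h"
    and ev: "even (Suc j)"
  shows "(\<lambda>h. Err h - C * h ^ k) \<in> O[at_right 0](\<lambda>h. h ^ j)"
proof -
  have PQm0: "(\<lambda>h. g (-h) * L (-h) - G (-h) * Q (-h)) \<in> O[nhds 0](\<lambda>h. (-h) ^ Suc j)"
    by (rule landau_o.big.compose[OF PQ lim_uminus])
  have "(\<lambda>h. (-h) ^ Suc j) = (\<lambda>h::real. h ^ Suc j)" using ev by (simp only: power_minus_even)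
  with PQm0 have PQm: "(\<lambda>h. g (-h) * L (-h) - G (-h) * Q (-h)) \<in> O[nhds 0](\<lambda>h. h ^ Suc j)" by (simp only:)
  define E where "E = (\<lambda>h. -1/2*((g h * L h - G h * Q h) + (g (-h) * L (-h) - G (-h) * Q (-h))) + K * h ^ Suc j)"
  have EO: "E \<in> O[nhds 0](\<lambda>h. h ^ Suc j)"
    unfolding E_def
    by (rule sum_in_bigo(1)[OF bigo_cmult[OF sum_in_bigo(1)[OF PQ PQm]] bigo_cmult[OF landau_o.big_refl]])
  have E2: "E h = -1/2*(g h * L h + g (-h) * L (-h)) - C * h ^ Suc k" for h
    unfolding E_def using poly[of h] by (simp add: algebra_simps)
  have fin: "(\<lambda>h. E h / h) \<in> O[at_right 0](\<lambda>h. h ^ j)" by (rule final_div[OF EO])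
  have "\<forall>\<^sub>F h in at_right (0::real). E h / h = Err h - C * h ^ k"
    using eventually_at_right_less[of "0::real"]
  proof (rule eventually_mono)
    fix h :: real assume "0 < h"
    then show "E h / h = Err h - C * h ^ k"
      unfolding E2 errid[OF less_imp_neq[OF \<open>0 < h\<close>, symmetric]] by (simp add: field_simps)
  qed
  from landau_o.big.in_cong[OF this] fin show ?thesis by simp
qed

lemma Err_id:
  assumes sym: "\<And>v w. Dbar (v, w) = Dbar (w, v)" and h: "h \<noteq> 0"
  shows "Err Dbar k k3 u x h = -1/2*(Dbar (u x, u (x + h)) * Lnode k k3 u x h
            + Dbar (u x, u (x + (-h))) * Lnode k k3 u x (-h)) / h"
proof -
  have "Phi Dbar k k3 u x h 0 = -1/2 * Dbar (u x, u (x + h)) * Lnode k k3 u x h"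
    unfolding Phi_def L0_id[OF h] by (simp add: nodeval_def)
  moreover have "Phi Dbar k k3 u x h (-1) = -1/2 * Dbar (u x, u (x + (-h))) * (- Lnode k k3 u x (-h))"
    unfolding Phi_def L1_id[OF h] using sym[of "u (x - h)" "u x"] by (simp add: nodeval_def)
  ultimately show ?thesis unfolding Err_def by (simp add: algebra_simps)
qed

theorem mainTheorem1:
  fixes u D :: "real \<Rightarrow> real" and Dbar :: "real \<times> real \<Rightarrow> real"
    and \<kappa> x :: real
  assumes "smooth1 u" and "smooth1 D" and "smooth2 Dbar"
    and "\<And>v w. Dbar (v, w) = Dbar (w, v)"
    and "\<And>v. Dbar (v, v) = D v"
  shows "(\<lambda>h. Err Dbar \<kappa> (\<kappa> - 1) u x h
            - (\<kappa> - 1) / 32 * (deriv (\<lambda>y. D (u y)) x * (deriv ^^ 5) u x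
                               + D (u x) * (deriv ^^ 6) u x) * h ^ 5)
           \<in> O[at_right 0](\<lambda>h. h ^ 7)
       \<and> (\<lambda>h. Err Dbar \<kappa> 0 u x h
            - (- (\<kappa> - 1) / 8) * (deriv (\<lambda>y. D (u y)) x * (deriv ^^ 3) u x
                               + D (u x) * (deriv ^^ 4) u x) * h ^ 3)
           \<in> O[at_right 0](\<lambda>h. h ^ 5)"
proof -
  note U = assms(1) and S = assms(3) and sym = assms(4) and diag = assms(5)
  define dD where "dD = deriv (\<lambda>y. D (u y)) x"
  obtain g2 where gG0: "(\<lambda>h. Dbar (u x, u (x + h)) - (D (u x) + dD / 2 * h + g2 * h^2))
           \<in> O[nhds 0](\<lambda>h. h ^ 3)"
    using g_expansion[OF U S sym diag, of x] unfolding dD_def by blast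
  define g where "g = (\<lambda>h. Dbar (u x, u (x + h)))"
  define G where "G = (\<lambda>h. D (u x) + dD / 2 * h + g2 * h^2)"
  have gG: "(\<lambda>h. g h - G h) \<in> O[nhds 0](\<lambda>h. h ^ 3)" using gG0 unfolding g_def G_def .
  have Gb: "G \<in> O[nhds 0](\<lambda>_. 1)"
    unfolding G_def
    by (rule sum_in_bigo(1)[OF sum_in_bigo(1)[OF const_bigo bigo_cmult[OF id_bigo1]] bigo_cmult[OF pow_bigo1]])
  define U3 where "U3 = (deriv ^^ 3) u x"
  define U4 where "U4 = (deriv ^^ 4) u x"
  define U5 where "U5 = (deriv ^^ 5) u x"
  define U6 where "U6 = (deriv ^^ 6) u x"
  define U7 where "U7 = (deriv ^^ 7) u x"
  have part1: "(\<lambda>h. Err Dbar \<kappa> (\<kappa> - 1) u x h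
            - (\<kappa> - 1) / 32 * (dD * U5 + D (u x) * U6) * h ^ 5)
           \<in> O[at_right 0](\<lambda>h. h ^ 7)"
  proof -
    define L where "L = (\<lambda>h. Lnode \<kappa> (\<kappa> - 1) u x h)"
    define Q where "Q = (\<lambda>h. - (\<kappa> - 1) * (U5 / 16 * h^5 + U6 / 32 * h^6 + U7 / 48 * h^7))"
    have LQ: "(\<lambda>h. L h - Q h) \<in> O[nhds 0](\<lambda>h. h ^ (3 + 5))"
      using L8[OF U, of \<kappa> x] unfolding L_def Q_def U5_def U6_def U7_def by simp
    have Qo: "Q \<in> O[nhds 0](\<lambda>h. h ^ 5)"
      unfolding Q_def
      by (intro bigo_cmult sum_in_bigo(1) pow_bigo) auto
    have PQ: "(\<lambda>h. g h * L h - G h * Q h) \<in> O[nhds 0](\<lambda>h. h ^ (3 + 5))"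
      by (rule combine[OF gG LQ Qo Gb])
    show ?thesis
    proof (rule assemble[where j=7 and k=5 and g=g and L=L and G=G and Q=Q])
      show "(\<lambda>h. g h * L h - G h * Q h) \<in> O[nhds 0](\<lambda>h. h ^ Suc 7)" using PQ by simp
      show "-1/2*(G h * Q h + G (-h) * Q (-h)) - (\<kappa> - 1) / 32 * (dD * U5 + D (u x) * U6) * h ^ Suc 5
          = ((\<kappa> - 1) * (dD * U7 / 96 + g2 * U6 / 32)) * h ^ Suc 7" for h
        unfolding G_def Q_def by (simp add: field_simps eval_nat_numeral)
      show "Err Dbar \<kappa> (\<kappa> - 1) u x h = -1/2*(g h * L h + g (-h) * L (-h)) / h" if "h \<noteq> 0" for h
        unfolding g_def L_def using Err_id[of Dbar, OF sym that] by simp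
      show "even (Suc 7)" by simp
    qed
  qed
  have part2: "(\<lambda>h. Err Dbar \<kappa> 0 u x h
            - (- (\<kappa> - 1) / 8) * (dD * U3 + D (u x) * U4) * h ^ 3)
           \<in> O[at_right 0](\<lambda>h. h ^ 5)"
  proof -
    define L where "L = (\<lambda>h. Lnode \<kappa> 0 u x h)"
    define Q where "Q = (\<lambda>h. (\<kappa> - 1) * (U3 / 4 * h^3 + U4 / 8 * h^4 + U5 / 16 * h^5))"
    have LQ: "(\<lambda>h. L h - Q h) \<in> O[nhds 0](\<lambda>h. h ^ (3 + 3))"
      using L6[OF U, of \<kappa> x] unfolding L_def Q_def U3_def U4_def U5_def by simp
    have Qo: "Q \<in> O[nhds 0](\<lambda>h. h ^ 3)"
      unfolding Q_def
      by (intro bigo_cmult sum_in_bigo(1) pow_bigo) auto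
    have PQ: "(\<lambda>h. g h * L h - G h * Q h) \<in> O[nhds 0](\<lambda>h. h ^ (3 + 3))"
      by (rule combine[OF gG LQ Qo Gb])
    show ?thesis
    proof (rule assemble[where j=5 and k=3 and g=g and L=L and G=G and Q=Q])
      show "(\<lambda>h. g h * L h - G h * Q h) \<in> O[nhds 0](\<lambda>h. h ^ Suc 5)" using PQ by simp
      show "-1/2*(G h * Q h + G (-h) * Q (-h)) - (- (\<kappa> - 1) / 8) * (dD * U3 + D (u x) * U4) * h ^ Suc 3
          = (- (\<kappa> - 1) * (dD * U5 / 32 + g2 * U4 / 8)) * h ^ Suc 5" for h
        unfolding G_def Q_def by (simp add: field_simps eval_nat_numeral)
      show "Err Dbar \<kappa> 0 u x h = -1/2*(g h * L h + g (-h) * L (-h)) / h" if "h \<noteq> 0" for h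
        unfolding g_def L_def using Err_id[of Dbar, OF sym that] by simp
      show "even (Suc 5)" by simp
    qed
  qed
  show ?thesis using part1 part2 unfolding dD_def U3_def U4_def U5_def U6_def by simp
qed

end
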